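(* Let $1\le M_{\mathrm{reg}}\le M$ and consider the clipped dendPLRNN $$\bm{z}_t=\bm{A}\bm{z}_{t-1}+\bm{W}\sum_{b=1}^B\alpha_b\big[\max(0,\bm{z}_{t-1}-\bm{h}_b)-\max(0,\bm{z}_{t-1})\big]+\bm{h}_0$$ with $\alpha_b\in\mathbb{R}$, $\bm{h}_b\in\mathbb{R}^M$, where the manifold attractor regularization is strictly enforced, i.e. $$\bm{A}=\begin{pmatrix}\bm{I}_{M_{\mathrm{reg}}}&\bm{0}\\ \bm{0}&\bm{A}_{\mathrm{nreg}}\end{pmatrix},\quad \bm{W}=\begin{pmatrix}\bm{0}_{M_{\mathrm{reg}}\times M_{\mathrm{reg}}}&\bm{0}\\ \bm{S}&\bm{W}_{\mathrm{nreg}}\end{pmatrix},\quad \bm{h}_0=\begin{pmatrix}\bm{0}\\ \bm{h}_0^{\mathrm{nreg}}\end{pmatrix},$$ with $\bm{A}_{\mathrm{nreg}}\in\mathbb{R}^{(M-M_{\mathrm{reg}})\times(M-M_{\mathrm{reg}})}$ diagonal, $\bm{W}_{\mathrm{nreg}}$ of the same size with zero diagonal, $\bm{S}\in\mathbb{R}^{(M-M_{\mathrm{reg}})\times M_{\mathrm{reg}}}$ arbitrary and $\bm{h}_0^{\mathrm{nreg}}\in\mathbb{R}^{M-M_{\mathrm{reg}}}$. If $\sigma_{\max}(\bm{A}_{\mathrm{nreg}})<1$, then every orbit $(\bm{z}_t)_{t\ge1}$ is bounded.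
   Context: $\max$ is taken componentwise; $\sigma_{\max}$ denotes the largest singular value. The manifold attractor regularization penalizes $\sum_{i\le M_{\mathrm{reg}}}(A_{ii}-1)^2+\sum_{i\le M_{\mathrm{reg}}}\sum_{j\neq i}W_{ij}^2+\sum_{i\le M_{\mathrm{reg}}}h_{0,i}^2$; "strictly enforced" means these terms are zero. *)

theory Defs
  imports "HOL-Analysis.Analysis"
begin

text \<open>Vectors in R^n are represented as functions nat \<Rightarrow> real restricted to indices < n,
  n x n matrices as functions nat \<Rightarrow> nat \<Rightarrow> real restricted to indices < n.\<close>

definition vnorm :: "nat \<Rightarrow> (nat \<Rightarrow> real) \<Rightarrow> real" where
  "vnorm n x = sqrt (\<Sum>i<n. (x i)^2)"

definition mat_vec :: "nat \<Rightarrow> (nat \<Rightarrow> nat \<Rightarrow> real) \<Rightarrow> (nat \<Rightarrow> real) \<Rightarrow> (nat \<Rightarrow> real)" where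
  "mat_vec n B x = (\<lambda>i. \<Sum>j<n. B i j * x j)"

definition sigma_max :: "nat \<Rightarrow> (nat \<Rightarrow> nat \<Rightarrow> real) \<Rightarrow> real" where
  "sigma_max n B = (if n = 0 then 0
     else (SUP x \<in> {x. vnorm n x = 1}. vnorm n (mat_vec n B x)))"

definition dendplrnn_step ::
  "nat \<Rightarrow> (nat \<Rightarrow> nat \<Rightarrow> real) \<Rightarrow> (nat \<Rightarrow> nat \<Rightarrow> real) \<Rightarrow> nat \<Rightarrow> (nat \<Rightarrow> real)
   \<Rightarrow> (nat \<Rightarrow> nat \<Rightarrow> real) \<Rightarrow> (nat \<Rightarrow> real) \<Rightarrow> (nat \<Rightarrow> real) \<Rightarrow> nat \<Rightarrow> real" where
  "dendplrnn_step M A W B \<alpha> h h0 z i =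
     (\<Sum>j<M. A i j * z j)
     + (\<Sum>j<M. W i j * (\<Sum>b\<in>{1..B}. \<alpha> b * (max 0 (z j - h b j) - max 0 (z j))))
     + h0 i"

end

theory Submission
  imports Defs
begin

lemma sq_sum_le: "(\<Sum>i<n. (y i)^2) \<le> (\<Sum>i<n. \<bar>y i\<bar>)^2" for y :: "nat \<Rightarrow> real"
proof (induction n)
  case 0 then show ?case by simp
next
  case (Suc n)
  have "0 \<le> (\<Sum>i<n. \<bar>y i\<bar>)" by (simp add: sum_nonneg)
  then have "0 \<le> 2 * (\<Sum>i<n. \<bar>y i\<bar>) * \<bar>y n\<bar>" by simp
  moreover have "(\<Sum>i<Suc n. \<bar>y i\<bar>)^2 = (\<Sum>i<n. \<bar>y i\<bar>)^2 + 2 * (\<Sum>i<n. \<bar>y i\<bar>) * \<bar>y n\<bar> + (y n)^2"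
    by (simp add: power2_eq_square algebra_simps)
  moreover have "(\<Sum>i<Suc n. (y i)^2) = (\<Sum>i<n. (y i)^2) + (y n)^2" by simp
  ultimately show ?case using Suc by linarith
qed

lemma vnorm_le_l1: "vnorm n y \<le> (\<Sum>i<n. \<bar>y i\<bar>)"
proof -
  have "sqrt (\<Sum>i<n. (y i)^2) \<le> sqrt ((\<Sum>i<n. \<bar>y i\<bar>)^2)"
    by (rule real_sqrt_le_mono[OF sq_sum_le])
  also have "\<dots> = (\<Sum>i<n. \<bar>y i\<bar>)" by (simp add: sum_nonneg)
  finally show ?thesis unfolding vnorm_def .
qed

lemma comp_le_one:
  assumes "vnorm n x = 1" "j < n"
  shows "\<bar>x j\<bar> \<le> 1"
proof -
  have "(\<Sum>i<n. (x i)^2) = 1" using assms(1) unfolding vnorm_def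
    by simp
  moreover have "(x j)^2 \<le> (\<Sum>i<n. (x i)^2)"
    using assms(2) by (intro member_le_sum) auto
  ultimately have "(x j)^2 \<le> 1" by simp
  then show ?thesis using abs_le_square_iff[of "x j" 1] by simp
qed

lemma sigma_bdd: "bdd_above ((\<lambda>x. vnorm n (mat_vec n Bm x)) ` {x. vnorm n x = 1})"
proof -
  have "vnorm n (mat_vec n Bm x) \<le> (\<Sum>i<n. \<Sum>j<n. \<bar>Bm i j\<bar>)" if "vnorm n x = 1" for x
  proof -
    have "\<bar>mat_vec n Bm x i\<bar> \<le> (\<Sum>j<n. \<bar>Bm i j\<bar>)" for i
    proof -
      have "\<bar>mat_vec n Bm x i\<bar> \<le> (\<Sum>j<n. \<bar>Bm i j * x j\<bar>)"
        unfolding mat_vec_def by (rule sum_abs)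
      also have "\<dots> \<le> (\<Sum>j<n. \<bar>Bm i j\<bar>)"
      proof (rule sum_mono)
        fix j assume "j \<in> {..<n}"
        then have "\<bar>x j\<bar> \<le> 1" using comp_le_one that by auto
        then show "\<bar>Bm i j * x j\<bar> \<le> \<bar>Bm i j\<bar>"
          by (simp add: abs_mult mult_left_le)
      qed
      finally show ?thesis .
    qed
    then have "(\<Sum>i<n. \<bar>mat_vec n Bm x i\<bar>) \<le> (\<Sum>i<n. \<Sum>j<n. \<bar>Bm i j\<bar>)"
      by (intro sum_mono) auto
    then show ?thesis using vnorm_le_l1 order_trans by blast
  qed
  then show ?thesis unfolding bdd_above_def by blast
qed

lemma max_diff: "\<bar>max 0 (x - c) - max 0 x\<bar> \<le> \<bar>c\<bar>" for x c :: real
  by (cases "x \<ge> 0"; cases "x - c \<ge> 0") auto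

lemma rec_bound:
  fixes u b :: "nat \<Rightarrow> real"
  assumes "\<bar>a\<bar> < 1" "\<And>t. \<bar>b t\<bar> \<le> K" "\<And>t. u (Suc t) = a * u t + b t"
  shows "\<bar>u t\<bar> \<le> \<bar>u 0\<bar> + K / (1 - \<bar>a\<bar>)"
proof (induction t)
  case 0
  have "0 \<le> K" using assms(2)[of 0] by simp
  then show ?case using assms(1) by simp
next
  case (Suc t)
  let ?R = "\<bar>u 0\<bar> + K / (1 - \<bar>a\<bar>)"
  have K0: "0 \<le> K" using assms(2)[of 0] by simp
  have pos: "0 < 1 - \<bar>a\<bar>" using assms(1) by simp
  have "\<bar>u (Suc t)\<bar> \<le> \<bar>a\<bar> * \<bar>u t\<bar> + K"
  proof -
    have "\<bar>a * u t + b t\<bar> \<le> \<bar>a * u t\<bar> + \<bar>b t\<bar>" by (rule abs_triangle_ineq)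
    then show ?thesis using assms(3)[of t] assms(2)[of t] by (simp add: abs_mult)
  qed
  also have "\<dots> \<le> \<bar>a\<bar> * ?R + K"
    using Suc by (simp add: mult_left_mono)
  also have "\<dots> \<le> ?R"
  proof -
    have "\<bar>a\<bar> * ?R + K = \<bar>a\<bar> * \<bar>u 0\<bar> + K / (1 - \<bar>a\<bar>)"
      using pos by (simp add: field_simps)
    also have "\<dots> \<le> ?R"
    proof -
      have "\<bar>a\<bar> * \<bar>u 0\<bar> \<le> 1 * \<bar>u 0\<bar>" using assms(1) by (intro mult_right_mono) auto
      then show ?thesis by simp
    qed
    finally show ?thesis .
  qed
  finally show ?case .
qed

theorem proposition2:
  fixes M Mreg B :: nat
    and A W :: "nat \<Rightarrow> nat \<Rightarrow> real"
    and \<alpha> :: "nat \<Rightarrow> real"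
    and h :: "nat \<Rightarrow> nat \<Rightarrow> real"
    and h0 :: "nat \<Rightarrow> real"
    and z :: "nat \<Rightarrow> nat \<Rightarrow> real"
  assumes "1 \<le> Mreg" and "Mreg \<le> M"
    and A_reg: "\<And>i j. i < Mreg \<Longrightarrow> j < M \<Longrightarrow> A i j = (if i = j then 1 else 0)"
    and A_off: "\<And>i j. Mreg \<le> i \<Longrightarrow> i < M \<Longrightarrow> j < Mreg \<Longrightarrow> A i j = 0"
    and A_diag: "\<And>i j. Mreg \<le> i \<Longrightarrow> i < M \<Longrightarrow> Mreg \<le> j \<Longrightarrow> j < M \<Longrightarrow> i \<noteq> j \<Longrightarrow> A i j = 0"
    and W_reg: "\<And>i j. i < Mreg \<Longrightarrow> j < M \<Longrightarrow> W i j = 0"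
    and W_diag: "\<And>i. Mreg \<le> i \<Longrightarrow> i < M \<Longrightarrow> W i i = 0"
    and h0_reg: "\<And>i. i < Mreg \<Longrightarrow> h0 i = 0"
    and sigma: "sigma_max (M - Mreg) (\<lambda>i j. A (Mreg + i) (Mreg + j)) < 1"
    and orbit: "\<And>t i. i < M \<Longrightarrow> z (Suc t) i = dendplrnn_step M A W B \<alpha> h h0 (z t) i"
  shows "\<exists>C. \<forall>t\<ge>1. \<forall>i<M. \<bar>z t i\<bar> \<le> C"
proof -
  have each: "\<exists>R. \<forall>t. \<bar>z t i\<bar> \<le> R" if iM: "i < M" for i
  proof (cases "i < Mreg")
    case True
    have "z (Suc t) i = z t i" for t
    proof -
      have "(\<Sum>j<M. A i j * z t j) = (\<Sum>j<M. if j = i then z t j else 0)"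
        using True A_reg by (intro sum.cong) auto
      also have "\<dots> = z t i" using iM by simp
      finally show ?thesis using orbit[OF iM] True W_reg h0_reg
        unfolding dendplrnn_step_def by simp
    qed
    then have "z t i = z 0 i" for t by (induction t) auto
    then have "\<forall>t. \<bar>z t i\<bar> \<le> \<bar>z 0 i\<bar>" by (metis order_refl)
    then show ?thesis by blast
  next
    case False
    let ?a = "A i i"
    define K where "K = (\<Sum>j<M. \<bar>W i j\<bar> * (\<Sum>b\<in>{1..B}. \<bar>\<alpha> b\<bar> * \<bar>h b j\<bar>))"
    define bt where "bt t = (\<Sum>j<M. W i j * (\<Sum>b\<in>{1..B}. \<alpha> b * (max 0 (z t j - h b j) - max 0 (z t j)))) + h0 i" for t
    have step: "z (Suc t) i = ?a * z t i + bt t" for t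
    proof -
      have "(\<Sum>j<M. A i j * z t j) = (\<Sum>j<M. if j = i then A i i * z t j else 0)"
      proof (rule sum.cong[OF refl])
        fix j assume "j \<in> {..<M}"
        then have jM: "j < M" by simp
        show "A i j * z t j = (if j = i then A i i * z t j else 0)"
        proof (cases "j = i")
          case False2: False
          have "A i j = 0"
          proof (cases "j < Mreg")
            case True
            then show ?thesis using A_off[of i j] False iM by simp
          next
            case False3: False
            then show ?thesis using A_diag[of i j] False False2 iM jM by simp
          qed
          then show ?thesis using False2 by simp
        qed simp
      qed
      also have "\<dots> = A i i * z t i" using iM by simp
      finally show ?thesis using orbit[OF iM] unfolding dendplrnn_step_def bt_def by simp
    qed
    have bnd: "\<bar>bt t\<bar> \<le> K + \<bar>h0 i\<bar>" for t
    proof -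
      have "\<bar>\<Sum>j<M. W i j * (\<Sum>b\<in>{1..B}. \<alpha> b * (max 0 (z t j - h b j) - max 0 (z t j)))\<bar> \<le> K"
        unfolding K_def
      proof (rule order_trans[OF sum_abs], rule sum_mono)
        fix j
        have "\<bar>\<Sum>b\<in>{1..B}. \<alpha> b * (max 0 (z t j - h b j) - max 0 (z t j))\<bar>
              \<le> (\<Sum>b\<in>{1..B}. \<bar>\<alpha> b\<bar> * \<bar>h b j\<bar>)"
        proof (rule order_trans[OF sum_abs], rule sum_mono)
          fix b
          show "\<bar>\<alpha> b * (max 0 (z t j - h b j) - max 0 (z t j))\<bar> \<le> \<bar>\<alpha> b\<bar> * \<bar>h b j\<bar>"
            unfolding abs_mult by (intro mult_left_mono max_diff) auto
        qed
        then show "\<bar>W i j * (\<Sum>b\<in>{1..B}. \<alpha> b * (max 0 (z t j - h b j) - max 0 (z t j)))\<bar>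
              \<le> \<bar>W i j\<bar> * (\<Sum>b\<in>{1..B}. \<bar>\<alpha> b\<bar> * \<bar>h b j\<bar>)"
          unfolding abs_mult by (intro mult_left_mono) auto
      qed
      then show ?thesis unfolding bt_def by linarith
    qed
    have "\<bar>?a\<bar> < 1"
    proof -
      define n where "n = M - Mreg"
      define k where "k = i - Mreg"
      have kn: "k < n" "n \<noteq> 0" using False iM unfolding n_def k_def by auto
      define x where "x = (\<lambda>l. if l = k then 1 else (0::real))"
      let ?Bm = "\<lambda>i j. A (Mreg + i) (Mreg + j)"
      have "(\<Sum>l<n. (x l)^2) = (\<Sum>l<n. if l = k then 1 else 0)"
        by (rule sum.cong) (auto simp: x_def)
      then have vx: "vnorm n x = 1" unfolding vnorm_def using kn by simp
      have "mat_vec n ?Bm x = (\<lambda>l. A (Mreg + l) i)"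
      proof
        fix l
        have "(\<Sum>j<n. ?Bm l j * x j) = (\<Sum>j<n. if j = k then A (Mreg + l) (Mreg + j) else 0)"
          by (rule sum.cong) (auto simp: x_def)
        also have "\<dots> = A (Mreg + l) (Mreg + k)" using kn by simp
        also have "Mreg + k = i" using False unfolding k_def by simp
        finally show "mat_vec n ?Bm x l = A (Mreg + l) i" unfolding mat_vec_def .
      qed
      then have "vnorm n (mat_vec n ?Bm x) = sqrt (\<Sum>l<n. (A (Mreg + l) i)^2)"
        unfolding vnorm_def by simp
      also have "(\<Sum>l<n. (A (Mreg + l) i)^2) = (\<Sum>l<n. if l = k then (A i i)^2 else 0)"
      proof (rule sum.cong[OF refl])
        fix l assume "l \<in> {..<n}"
        then have "Mreg + l < M" unfolding n_def by auto
        moreover have "Mreg + l = i \<longleftrightarrow> l = k" using False unfolding k_def by auto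
        ultimately show "(A (Mreg + l) i)^2 = (if l = k then (A i i)^2 else 0)"
          using A_diag[of "Mreg + l" i] False iM by auto
      qed
      also have "\<dots> = (A i i)^2" using kn by simp
      finally have "vnorm n (mat_vec n ?Bm x) = \<bar>A i i\<bar>" by simp
      moreover have "vnorm n (mat_vec n ?Bm x) \<le> sigma_max n ?Bm"
        unfolding sigma_max_def using kn vx sigma_bdd by (auto intro: cSUP_upper)
      ultimately show ?thesis using sigma n_def by simp
    qed
    then show ?thesis using rec_bound[of ?a bt "K + \<bar>h0 i\<bar>" "\<lambda>t. z t i"] step bnd by blast
  qed
  then have ex: "\<forall>i\<in>{..<M}. \<exists>R. \<forall>t. \<bar>z t i\<bar> \<le> R" by auto
  then obtain R where R0: "\<forall>i\<in>{..<M}. \<forall>t. \<bar>z t i\<bar> \<le> R i" using bchoice[OF ex] by blast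
  have R: "\<And>i t. i < M \<Longrightarrow> \<bar>z t i\<bar> \<le> R i" using R0 by blast
  have "\<bar>z t i\<bar> \<le> (\<Sum>j<M. \<bar>R j\<bar>)" if "i < M" for t i
  proof -
    have "\<bar>R i\<bar> \<le> (\<Sum>j<M. \<bar>R j\<bar>)" using that by (intro member_le_sum) auto
    then show ?thesis using R[OF that, of t] by linarith
  qed
  then show ?thesis by blast
qed

end
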